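(* Let $\lambda=(\lambda_1,\dots,\lambda_r)$ be a partition of $n\ge1$. The Sprague–Grundy value $\mathbb{SG}(\mathcal{D}(\lambda))$ can be computed in $O(\log r)\le O(\log n)$ time units.
   Context: A partition of $n$ is a non-increasing sequence $\lambda_1\ge\dots\ge\lambda_r>0$ of integers with sum $n$, given as input as the list $(\lambda_1,\dots,\lambda_r)$ with random access to its entries. For non-negative $i,j$, $\lambda[i,j]$ is $(\lambda_{i+1}-j,\dots,\lambda_r-j)$ with all non-positive entries removed. Downright: positions $\mathcal{D}(\mu)$, $\mu$ nonempty with $s$ parts; move to $\mathcal{D}(\mu[1,0])$ allowed iff $s>1$, move to $\mathcal{D}(\mu[0,1])$ allowed iff $\mu_1>1$. Normal play; $\mathbb{SG}(A)=\operatorname{mex}\{\mathbb{SG}(B):A\to B\}$. A time unit is any of: reading one integer (entry) of the input, one basic arithmetic operation on integers (addition, subtraction, multiplication or division by 2, parity, comparison), or computing the mex of a set of at most two integers from $\{0,1,2\}$. *)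

theory Defs
  imports Main "HOL-Library.Discrete_Functions"
begin

definition is_partition :: "nat list \<Rightarrow> bool" where
  "is_partition lam \<longleftrightarrow> lam \<noteq> [] \<and> sorted_wrt (\<ge>) lam \<and> (\<forall>x\<in>set lam. x > 0)"

text \<open>mu[0,1]: subtract 1 from every part and drop the non-positive entries;
  mu[1,0] is tl mu.\<close>
definition shift :: "nat list \<Rightarrow> nat list" where
  "shift mu = filter (\<lambda>x. x > 0) (map (\<lambda>x. x - 1) mu)"

definition mex :: "nat set \<Rightarrow> nat" where
  "mex S = (LEAST k. k \<notin> S)"

lemma sum_list_shift_le: "sum_list (shift mu) + length mu \<le> sum_list mu + length mu"
  unfolding shift_def by (induction mu) auto

lemma sum_list_shift_lt: "mu \<noteq> [] \<Longrightarrow> hd mu > 1 \<Longrightarrow> sum_list (shift mu) < sum_list mu"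
  unfolding shift_def by (cases mu) (auto, induct_tac list, auto)

lemma length_shift_le: "length (shift mu) \<le> length mu"
  unfolding shift_def by simp

text \<open>Sprague-Grundy value of the Downright position D(mu): moves to D(mu[1,0]) if mu has
  more than one part, to D(mu[0,1]) if mu_1 > 1.\<close>
function sgD :: "nat list \<Rightarrow> nat" where
  "sgD mu = mex ((if length mu > 1 then {sgD (tl mu)} else {})
               \<union> (if mu \<noteq> [] \<and> hd mu > 1 then {sgD (shift mu)} else {}))"
  by auto
termination
proof (relation "measure (\<lambda>mu. length mu + sum_list mu)")
  fix mu :: "nat list"
  assume "1 < length mu"
  then show "(tl mu, mu) \<in> measure (\<lambda>mu. length mu + sum_list mu)"
    by (cases mu) auto
next
  fix mu :: "nat list"
  assume "mu \<noteq> [] \<and> 1 < hd mu"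
  then show "(shift mu, mu) \<in> measure (\<lambda>mu. length mu + sum_list mu)"
    using sum_list_shift_lt[of mu] length_shift_le[of mu] by auto
qed auto

text \<open>Every executed instruction costs one time unit.
  ReadEntry d s reads the entry lambda_i (1-indexed) where i is the content of register s
  (0 if i is out of range).\<close>
datatype instr =
    Const nat int
  | ReadEntry nat nat
  | Add nat nat nat
  | Sub nat nat nat
  | Mul nat nat nat
  | Half nat nat
  | Parity nat nat
  | Less nat nat nat
  | Equal nat nat nat
  | Mex2 nat nat nat
  | Jz nat nat
  | Jmp nat
  | Halt nat

type_synonym config = "nat \<times> (nat \<Rightarrow> int)"

definition read_entry :: "nat list \<Rightarrow> int \<Rightarrow> int" where
  "read_entry lam i = (if 1 \<le> i \<and> nat i \<le> length lam then int (lam ! (nat i - 1)) else 0)"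

definition mex_int :: "int \<Rightarrow> int \<Rightarrow> int" where
  "mex_int a b = int (LEAST k::nat. int k \<noteq> a \<and> int k \<noteq> b)"

fun step :: "nat list \<Rightarrow> instr \<Rightarrow> config \<Rightarrow> config" where
  "step lam (Const d c) (pc, R) = (Suc pc, R(d := c))"
| "step lam (ReadEntry d s) (pc, R) = (Suc pc, R(d := read_entry lam (R s)))"
| "step lam (Add d a b) (pc, R) = (Suc pc, R(d := R a + R b))"
| "step lam (Sub d a b) (pc, R) = (Suc pc, R(d := R a - R b))"
| "step lam (Mul d a b) (pc, R) = (Suc pc, R(d := R a * R b))"
| "step lam (Half d a) (pc, R) = (Suc pc, R(d := R a div 2))"
| "step lam (Parity d a) (pc, R) = (Suc pc, R(d := R a mod 2))"
| "step lam (Less d a b) (pc, R) = (Suc pc, R(d := (if R a < R b then 1 else 0)))"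
| "step lam (Equal d a b) (pc, R) = (Suc pc, R(d := (if R a = R b then 1 else 0)))"
| "step lam (Mex2 d a b) (pc, R) = (Suc pc, R(d := mex_int (R a) (R b)))"
| "step lam (Jz a t) (pc, R) = (if R a = 0 then t else Suc pc, R)"
| "step lam (Jmp t) (pc, R) = (t, R)"
| "step lam (Halt d) (pc, R) = (pc, R)"

text \<open>exec P lam k c = Some v iff, started in configuration c, the program halts
  within k executed instructions (the Halt included) with output v.\<close>
fun exec :: "instr list \<Rightarrow> nat list \<Rightarrow> nat \<Rightarrow> config \<Rightarrow> int option" where
  "exec P lam 0 c = None"
| "exec P lam (Suc k) (pc, R) =
     (if pc < length P then
        (case P ! pc of
           Halt d \<Rightarrow> Some (R d)
         | i \<Rightarrow> exec P lam k (step lam i (pc, R)))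
      else None)"

definition init_config :: "nat list \<Rightarrow> config" where
  "init_config lam = (0, (\<lambda>_. 0)(0 := int (length lam)))"

end

theory Submission
  imports Defs
begin


definition reach :: "instr list \<Rightarrow> nat list \<Rightarrow> nat \<Rightarrow> config \<Rightarrow> config \<Rightarrow> bool" where
  "reach P lam N c c' \<longleftrightarrow> (\<exists>n\<le>N. \<forall>m. exec P lam (n+m) c = exec P lam m c')"

lemma reach_refl: "reach P lam N c c"
  unfolding reach_def by (rule exI[of _ 0]) auto

lemma reach_trans: "reach P lam N1 c c' \<Longrightarrow> reach P lam N2 c' c'' \<Longrightarrow> reach P lam (N1+N2) c c''"
  unfolding reach_def
proof -
  assume "\<exists>n\<le>N1. \<forall>m. exec P lam (n + m) c = exec P lam m c'"
    "\<exists>n\<le>N2. \<forall>m. exec P lam (n + m) c' = exec P lam m c''"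
  then obtain n1 n2 where "n1 \<le> N1" "n2 \<le> N2" "\<forall>m. exec P lam (n1 + m) c = exec P lam m c'"
    "\<forall>m. exec P lam (n2 + m) c' = exec P lam m c''" by blast
  then show "\<exists>n\<le>N1+N2. \<forall>m. exec P lam (n + m) c = exec P lam m c''"
    by (intro exI[of _ "n1+n2"]) (auto simp: add.assoc)
qed

lemma reach_mono: "reach P lam N c c' \<Longrightarrow> N \<le> N' \<Longrightarrow> reach P lam N' c c'"
  unfolding reach_def by (meson order_trans)

lemma reach_stepI:
  assumes "pc < length P" "\<forall>d. P!pc \<noteq> Halt d" "reach P lam N (step lam (P!pc) (pc,R)) c'"
  shows "reach P lam (Suc N) (pc,R) c'"
proof -
  have "\<forall>m. exec P lam (Suc m) (pc,R) = exec P lam m (step lam (P!pc) (pc,R))"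
    using assms(1,2) by (auto split: instr.split)
  then have "reach P lam 1 (pc,R) (step lam (P!pc) (pc,R))"
    unfolding reach_def by (intro exI[of _ 1]) auto
  from reach_trans[OF this assms(3)] show ?thesis by simp
qed

lemma reach_halt:
  assumes "reach P lam N c (pc,R)" "pc < length P" "P!pc = Halt d" "N < F"
  shows "exec P lam F c = Some (R d)"
proof -
  obtain n where n: "n \<le> N" "\<forall>m. exec P lam (n+m) c = exec P lam m (pc,R)"
    using assms(1) unfolding reach_def by blast
  have "F = n + Suc (F - n - 1)" using n(1) assms(4) by simp
  then have "exec P lam F c = exec P lam (Suc (F - n - 1)) (pc,R)" using n(2) by metis
  then show ?thesis using assms(2,3) by simp
qed

definition Prog :: "instr list" where
 "Prog = [Const 25 1, Const 21 1, Add 22 0 25, Sub 24 22 21, Less 24 25 24, Jz 24 15, Add 23 21 22, Half 23 23, ReadEntry 24 23, Less 24 24 23, Jz 24 13, Add 22 23 33, Jmp 3, Add 21 23 33, Jmp 3, ReadEntry 28 21, Sub 28 28 21, Add 28 28 25, Add 27 21 33, Add 22 0 25, Sub 24 22 21, Less 24 25 24, Jz 24 32, Add 23 21 22, Half 23 23, ReadEntry 24 23, Less 24 24 27, Jz 24 30, Add 22 23 33, Jmp 20, Add 21 23 33, Jmp 20, Sub 29 21 27, Const 30 (-1), Less 24 25 28, Jz 24 37, Parity 30 28, Const 31 (-1), Less 24 33 29, Jz 24 42, Add 32 29 25, Parity 31 32, Mex2 32 30 31, Halt 32]"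


lemma Pn0: "Prog ! 0 = Const 25 1" by (simp add: Prog_def)
lemma Pn1: "Prog ! 1 = Const 21 1" by (simp add: Prog_def)
lemma Pn2: "Prog ! 2 = Add 22 0 25" by (simp add: Prog_def)
lemma Pn3: "Prog ! 3 = Sub 24 22 21" by (simp add: Prog_def)
lemma Pn4: "Prog ! 4 = Less 24 25 24" by (simp add: Prog_def)
lemma Pn5: "Prog ! 5 = Jz 24 15" by (simp add: Prog_def)
lemma Pn6: "Prog ! 6 = Add 23 21 22" by (simp add: Prog_def)
lemma Pn7: "Prog ! 7 = Half 23 23" by (simp add: Prog_def)
lemma Pn8: "Prog ! 8 = ReadEntry 24 23" by (simp add: Prog_def)
lemma Pn9: "Prog ! 9 = Less 24 24 23" by (simp add: Prog_def)
lemma Pn10: "Prog ! 10 = Jz 24 13" by (simp add: Prog_def)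
lemma Pn11: "Prog ! 11 = Add 22 23 33" by (simp add: Prog_def)
lemma Pn12: "Prog ! 12 = Jmp 3" by (simp add: Prog_def)
lemma Pn13: "Prog ! 13 = Add 21 23 33" by (simp add: Prog_def)
lemma Pn14: "Prog ! 14 = Jmp 3" by (simp add: Prog_def)
lemma Pn15: "Prog ! 15 = ReadEntry 28 21" by (simp add: Prog_def)
lemma Pn16: "Prog ! 16 = Sub 28 28 21" by (simp add: Prog_def)
lemma Pn17: "Prog ! 17 = Add 28 28 25" by (simp add: Prog_def)
lemma Pn18: "Prog ! 18 = Add 27 21 33" by (simp add: Prog_def)
lemma Pn19: "Prog ! 19 = Add 22 0 25" by (simp add: Prog_def)
lemma Pn20: "Prog ! 20 = Sub 24 22 21" by (simp add: Prog_def)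
lemma Pn21: "Prog ! 21 = Less 24 25 24" by (simp add: Prog_def)
lemma Pn22: "Prog ! 22 = Jz 24 32" by (simp add: Prog_def)
lemma Pn23: "Prog ! 23 = Add 23 21 22" by (simp add: Prog_def)
lemma Pn24: "Prog ! 24 = Half 23 23" by (simp add: Prog_def)
lemma Pn25: "Prog ! 25 = ReadEntry 24 23" by (simp add: Prog_def)
lemma Pn26: "Prog ! 26 = Less 24 24 27" by (simp add: Prog_def)
lemma Pn27: "Prog ! 27 = Jz 24 30" by (simp add: Prog_def)
lemma Pn28: "Prog ! 28 = Add 22 23 33" by (simp add: Prog_def)
lemma Pn29: "Prog ! 29 = Jmp 20" by (simp add: Prog_def)
lemma Pn30: "Prog ! 30 = Add 21 23 33" by (simp add: Prog_def)
lemma Pn31: "Prog ! 31 = Jmp 20" by (simp add: Prog_def)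
lemma Pn32: "Prog ! 32 = Sub 29 21 27" by (simp add: Prog_def)
lemma Pn33: "Prog ! 33 = Const 30 (-1)" by (simp add: Prog_def)
lemma Pn34: "Prog ! 34 = Less 24 25 28" by (simp add: Prog_def)
lemma Pn35: "Prog ! 35 = Jz 24 37" by (simp add: Prog_def)
lemma Pn36: "Prog ! 36 = Parity 30 28" by (simp add: Prog_def)
lemma Pn37: "Prog ! 37 = Const 31 (-1)" by (simp add: Prog_def)
lemma Pn38: "Prog ! 38 = Less 24 33 29" by (simp add: Prog_def)
lemma Pn39: "Prog ! 39 = Jz 24 42" by (simp add: Prog_def)
lemma Pn40: "Prog ! 40 = Add 32 29 25" by (simp add: Prog_def)
lemma Pn41: "Prog ! 41 = Parity 31 32" by (simp add: Prog_def)
lemma Pn42: "Prog ! 42 = Mex2 32 30 31" by (simp add: Prog_def)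
lemma Pn43: "Prog ! 43 = Halt 32" by (simp add: Prog_def)
lemmas Pn = Pn0 Pn1 Pn2 Pn3 Pn4 Pn5 Pn6 Pn7 Pn8 Pn9 Pn10 Pn11 Pn12 Pn13 Pn14 Pn15 Pn16 Pn17 Pn18 Pn19 Pn20 Pn21 Pn22 Pn23 Pn24 Pn25 Pn26 Pn27 Pn28 Pn29 Pn30 Pn31 Pn32 Pn33 Pn34 Pn35 Pn36 Pn37 Pn38 Pn39 Pn40 Pn41 Pn42 Pn43

lemma len_Prog: "length Prog = 44" by (simp add: Prog_def)


lemma loop1:
  "R 25 = 1 \<Longrightarrow> R 33 = 0 \<Longrightarrow> R 21 \<le> read_entry lam (R 21) \<Longrightarrow> \<not> R 22 \<le> read_entry lam (R 22)
   \<Longrightarrow> R 21 < R 22 \<Longrightarrow> R 22 - R 21 \<le> 2^t \<Longrightarrow>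
   \<exists>R'. reach Prog lam (12*t+3) (3,R) (15,R') \<and> (\<forall>x. x\<notin>{21,22,23,24} \<longrightarrow> R' x = R x)
     \<and> R' 22 = R' 21 + 1 \<and> \<not> R' 22 \<le> read_entry lam (R' 22) \<and> R' 21 \<le> read_entry lam (R' 21) \<and> R 21 \<le> R' 21 \<and> R' 22 \<le> R 22"
proof (induction t arbitrary: R)
  case 0
  then have d: "R 22 = R 21 + 1" by simp
  show ?case
    apply (intro exI conjI)
     apply (rule reach_mono[where N="Suc (Suc (Suc 0))"])
      apply (rule reach_stepI, simp add: Pn len_Prog, simp add: Pn, simp add: Pn 0 d)+
      apply (rule reach_refl)
    using 0 d by auto
next
  case (Suc t)
  show ?case
  proof (cases "R 22 = R 21 + 1")
    case True
    show ?thesis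
    apply (intro exI conjI)
     apply (rule reach_mono[where N="Suc (Suc (Suc 0))"])
      apply (rule reach_stepI, simp add: Pn len_Prog, simp add: Pn, simp add: Pn Suc.prems True)+
      apply (rule reach_refl)
    using Suc True by auto
  next
    case False
    define mid where "mid = (R 21 + R 22) div 2"
    have d2: "1 < R 22 - R 21" using False Suc.prems by auto
    have m1: "R 21 < mid" "mid < R 22" using d2 unfolding mid_def by auto
    have md: "mid - R 21 \<le> 2^t" "R 22 - mid \<le> 2^t" using Suc.prems(6) d2 unfolding mid_def by auto
    show ?thesis
    proof (cases "read_entry lam mid < mid")
      case True
      have "\<exists>R''. reach Prog lam 10 (3,R) (3,R'') \<and> (\<forall>x. x\<notin>{21,22,23,24} \<longrightarrow> R'' x = R x) \<and> R'' 21 = R 21 \<and> R'' 22 = mid"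
        apply (intro exI conjI)
         apply (rule reach_mono[where N="Suc (Suc (Suc (Suc (Suc (Suc (Suc (Suc (Suc (Suc 0)))))))))"])
          apply (rule reach_stepI, simp add: Pn len_Prog, simp add: Pn, simp add: Pn d2 True mid_def[symmetric] Suc.prems)+
          apply (rule reach_refl)
        using Suc True by auto
      then obtain R'' where R'': "reach Prog lam 10 (3,R) (3,R'')" "\<forall>x. x\<notin>{21,22,23,24} \<longrightarrow> R'' x = R x" "R'' 21 = R 21" "R'' 22 = mid"
        by blast
      have "\<exists>R'. reach Prog lam (12*t+3) (3,R'') (15,R') \<and> (\<forall>x. x\<notin>{21,22,23,24} \<longrightarrow> R' x = R'' x)
     \<and> R' 22 = R' 21 + 1 \<and> \<not> R' 22 \<le> read_entry lam (R' 22) \<and> R' 21 \<le> read_entry lam (R' 21) \<and> R'' 21 \<le> R' 21 \<and> R' 22 \<le> R'' 22"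
        apply (rule Suc.IH) using R'' Suc.prems True m1 md by auto
      then obtain R' where R': "reach Prog lam (12*t+3) (3,R'') (15,R')" "(\<forall>x. x\<notin>{21,22,23,24} \<longrightarrow> R' x = R'' x)"
     "R' 22 = R' 21 + 1" "\<not> R' 22 \<le> read_entry lam (R' 22)" "R' 21 \<le> read_entry lam (R' 21)" "R'' 21 \<le> R' 21" "R' 22 \<le> R'' 22" by blast
      show ?thesis
        apply (rule exI[of _ R'])
        using reach_mono[OF reach_trans[OF R''(1) R'(1)]] R' R'' m1 by auto
    next
      case False
      have "\<exists>R''. reach Prog lam 10 (3,R) (3,R'') \<and> (\<forall>x. x\<notin>{21,22,23,24} \<longrightarrow> R'' x = R x) \<and> R'' 21 = mid \<and> R'' 22 = R 22"
        apply (intro exI conjI)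
         apply (rule reach_mono[where N="Suc (Suc (Suc (Suc (Suc (Suc (Suc (Suc (Suc (Suc 0)))))))))"])
          apply (rule reach_stepI, simp add: Pn len_Prog, simp add: Pn, simp add: Pn d2 False mid_def[symmetric] Suc.prems)+
          apply (rule reach_refl)
        using Suc False by auto
      then obtain R'' where R'': "reach Prog lam 10 (3,R) (3,R'')" "\<forall>x. x\<notin>{21,22,23,24} \<longrightarrow> R'' x = R x" "R'' 21 = mid" "R'' 22 = R 22"
        by blast
      have "\<exists>R'. reach Prog lam (12*t+3) (3,R'') (15,R') \<and> (\<forall>x. x\<notin>{21,22,23,24} \<longrightarrow> R' x = R'' x)
     \<and> R' 22 = R' 21 + 1 \<and> \<not> R' 22 \<le> read_entry lam (R' 22) \<and> R' 21 \<le> read_entry lam (R' 21) \<and> R'' 21 \<le> R' 21 \<and> R' 22 \<le> R'' 22"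
        apply (rule Suc.IH) using R'' Suc.prems False m1 md by auto
      then obtain R' where R': "reach Prog lam (12*t+3) (3,R'') (15,R')" "(\<forall>x. x\<notin>{21,22,23,24} \<longrightarrow> R' x = R'' x)"
     "R' 22 = R' 21 + 1" "\<not> R' 22 \<le> read_entry lam (R' 22)" "R' 21 \<le> read_entry lam (R' 21)" "R'' 21 \<le> R' 21" "R' 22 \<le> R'' 22" by blast
      show ?thesis
        apply (rule exI[of _ R'])
        using reach_mono[OF reach_trans[OF R''(1) R'(1)]] R' R'' m1 by auto
    qed
  qed
qed
lemma loop2:
  "R 25 = 1 \<Longrightarrow> R 33 = 0 \<Longrightarrow> R 27 \<le> read_entry lam (R 21) \<Longrightarrow> \<not> R 27 \<le> read_entry lam (R 22)
   \<Longrightarrow> R 21 < R 22 \<Longrightarrow> R 22 - R 21 \<le> 2^t \<Longrightarrow>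
   \<exists>R'. reach Prog lam (12*t+3) (20,R) (32,R') \<and> (\<forall>x. x\<notin>{21,22,23,24} \<longrightarrow> R' x = R x)
     \<and> R' 22 = R' 21 + 1 \<and> \<not> R 27 \<le> read_entry lam (R' 22) \<and> R 27 \<le> read_entry lam (R' 21) \<and> R 21 \<le> R' 21 \<and> R' 22 \<le> R 22"
proof (induction t arbitrary: R)
  case 0
  then have d: "R 22 = R 21 + 1" by simp
  show ?case
    apply (intro exI conjI)
     apply (rule reach_mono[where N="Suc (Suc (Suc 0))"])
      apply (rule reach_stepI, simp add: Pn len_Prog, simp add: Pn, simp add: Pn 0 d)+
      apply (rule reach_refl)
    using 0 d by auto
next
  case (Suc t)
  show ?case
  proof (cases "R 22 = R 21 + 1")
    case True
    show ?thesis
    apply (intro exI conjI)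
     apply (rule reach_mono[where N="Suc (Suc (Suc 0))"])
      apply (rule reach_stepI, simp add: Pn len_Prog, simp add: Pn, simp add: Pn Suc.prems True)+
      apply (rule reach_refl)
    using Suc True by auto
  next
    case False
    define mid where "mid = (R 21 + R 22) div 2"
    have d2: "1 < R 22 - R 21" using False Suc.prems by auto
    have m1: "R 21 < mid" "mid < R 22" using d2 unfolding mid_def by auto
    have md: "mid - R 21 \<le> 2^t" "R 22 - mid \<le> 2^t" using Suc.prems(6) d2 unfolding mid_def by auto
    show ?thesis
    proof (cases "read_entry lam mid < R 27")
      case True
      have "\<exists>R''. reach Prog lam 10 (20,R) (20,R'') \<and> (\<forall>x. x\<notin>{21,22,23,24} \<longrightarrow> R'' x = R x) \<and> R'' 21 = R 21 \<and> R'' 22 = mid"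
        apply (intro exI conjI)
         apply (rule reach_mono[where N="Suc (Suc (Suc (Suc (Suc (Suc (Suc (Suc (Suc (Suc 0)))))))))"])
          apply (rule reach_stepI, simp add: Pn len_Prog, simp add: Pn, simp add: Pn d2 True mid_def[symmetric] Suc.prems)+
          apply (rule reach_refl)
        using Suc True by auto
      then obtain R'' where R'': "reach Prog lam 10 (20,R) (20,R'')" "\<forall>x. x\<notin>{21,22,23,24} \<longrightarrow> R'' x = R x" "R'' 21 = R 21" "R'' 22 = mid"
        by blast
      have "\<exists>R'. reach Prog lam (12*t+3) (20,R'') (32,R') \<and> (\<forall>x. x\<notin>{21,22,23,24} \<longrightarrow> R' x = R'' x)
     \<and> R' 22 = R' 21 + 1 \<and> \<not> R'' 27 \<le> read_entry lam (R' 22) \<and> R'' 27 \<le> read_entry lam (R' 21) \<and> R'' 21 \<le> R' 21 \<and> R' 22 \<le> R'' 22"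
        apply (rule Suc.IH) using R'' Suc.prems True m1 md by auto
      then obtain R' where R': "reach Prog lam (12*t+3) (20,R'') (32,R')" "(\<forall>x. x\<notin>{21,22,23,24} \<longrightarrow> R' x = R'' x)"
     "R' 22 = R' 21 + 1" "\<not> R'' 27 \<le> read_entry lam (R' 22)" "R'' 27 \<le> read_entry lam (R' 21)" "R'' 21 \<le> R' 21" "R' 22 \<le> R'' 22" by blast
      show ?thesis
        apply (rule exI[of _ R'])
        using reach_mono[OF reach_trans[OF R''(1) R'(1)]] R' R'' m1 by auto
    next
      case False
      have "\<exists>R''. reach Prog lam 10 (20,R) (20,R'') \<and> (\<forall>x. x\<notin>{21,22,23,24} \<longrightarrow> R'' x = R x) \<and> R'' 21 = mid \<and> R'' 22 = R 22"
        apply (intro exI conjI)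
         apply (rule reach_mono[where N="Suc (Suc (Suc (Suc (Suc (Suc (Suc (Suc (Suc (Suc 0)))))))))"])
          apply (rule reach_stepI, simp add: Pn len_Prog, simp add: Pn, simp add: Pn d2 False mid_def[symmetric] Suc.prems)+
          apply (rule reach_refl)
        using Suc False by auto
      then obtain R'' where R'': "reach Prog lam 10 (20,R) (20,R'')" "\<forall>x. x\<notin>{21,22,23,24} \<longrightarrow> R'' x = R x" "R'' 21 = mid" "R'' 22 = R 22"
        by blast
      have "\<exists>R'. reach Prog lam (12*t+3) (20,R'') (32,R') \<and> (\<forall>x. x\<notin>{21,22,23,24} \<longrightarrow> R' x = R'' x)
     \<and> R' 22 = R' 21 + 1 \<and> \<not> R'' 27 \<le> read_entry lam (R' 22) \<and> R'' 27 \<le> read_entry lam (R' 21) \<and> R'' 21 \<le> R' 21 \<and> R' 22 \<le> R'' 22"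
        apply (rule Suc.IH) using R'' Suc.prems False m1 md by auto
      then obtain R' where R': "reach Prog lam (12*t+3) (20,R'') (32,R')" "(\<forall>x. x\<notin>{21,22,23,24} \<longrightarrow> R' x = R'' x)"
     "R' 22 = R' 21 + 1" "\<not> R'' 27 \<le> read_entry lam (R' 22)" "R'' 27 \<le> read_entry lam (R' 21)" "R'' 21 \<le> R' 21" "R' 22 \<le> R'' 22" by blast
      show ?thesis
        apply (rule exI[of _ R'])
        using reach_mono[OF reach_trans[OF R''(1) R'(1)]] R' R'' m1 by auto
    qed
  qed
qed


declare sgD.simps[simp del]

lemma mex_eqI: "k \<notin> S \<Longrightarrow> (\<And>j. j < k \<Longrightarrow> j \<in> S) \<Longrightarrow> mex S = k"
  unfolding mex_def by (rule Least_equality) (auto simp: not_less[symmetric])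

lemma mex_notin: "finite S \<Longrightarrow> mex S \<notin> S"
  unfolding mex_def by (rule LeastI_ex) (use infinite_UNIV_nat ex_new_if_finite in blast)

lemma mex_empty[simp]: "mex {} = 0" by (rule mex_eqI) auto
lemma mex_single: "mex {a} = (if a = 0 then 1 else 0)" by (cases "a = 0") (auto intro!: mex_eqI)
lemma mex_two_eq: "y \<noteq> mex {x} \<Longrightarrow> mex {y, x} = mex {x}"
  by (cases "x = 0") (auto simp: mex_single intro!: mex_eqI)
lemma mex_two_0: "x \<noteq> 0 \<Longrightarrow> y \<noteq> 0 \<Longrightarrow> mex {y, x} = 0"
  by (rule mex_eqI) auto

lemma shift_Nil[simp]: "shift [] = []" by (simp add: shift_def)
lemma shift_Cons[simp]: "shift (x # xs) = (if 1 < x then (x - 1) # shift xs else shift xs)"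
  by (auto simp: shift_def)

lemma sgD_unf: "sgD mu = mex ((if length mu > 1 then {sgD (tl mu)} else {})
               \<union> (if mu \<noteq> [] \<and> hd mu > 1 then {sgD (shift mu)} else {}))"
  by (rule sgD.simps)

lemma sgD_notin: "sgD mu \<notin> ((if length mu > 1 then {sgD (tl mu)} else {})
               \<union> (if mu \<noteq> [] \<and> hd mu > 1 then {sgD (shift mu)} else {}))"
proof -
  let ?S = "((if length mu > 1 then {sgD (tl mu)} else {})
               \<union> (if mu \<noteq> [] \<and> hd mu > 1 then {sgD (shift mu)} else {}))"
  have "mex ?S \<notin> ?S" by (rule mex_notin) auto
  then show ?thesis using sgD_unf[of mu] by simp
qed

lemma sgD_ne_tl: "length mu > 1 \<Longrightarrow> sgD mu \<noteq> sgD (tl mu)"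
  using sgD_notin[of mu] by auto

lemma sgD_ne_shift: "mu \<noteq> [] \<Longrightarrow> hd mu > 1 \<Longrightarrow> sgD mu \<noteq> sgD (shift mu)"
  using sgD_notin[of mu] by auto

lemma sorted_shift: "sorted_wrt (\<ge>) xs \<Longrightarrow> sorted_wrt (\<ge>) (shift xs)"
  unfolding shift_def by (intro sorted_wrt_filter) (auto simp: sorted_wrt_map elim!: sorted_wrt_mono_rel[rotated])

lemma shift_Nil_iff: "sorted_wrt (\<ge>) xs \<Longrightarrow> shift xs = [] \<longleftrightarrow> (xs = [] \<or> hd xs \<le> 1)"
proof (induction xs)
  case (Cons a xs)
  then show ?case by (cases xs) auto
qed simp

lemma diag:
  "sorted_wrt (\<ge>) mu \<Longrightarrow> length mu > 1 \<Longrightarrow> mu!1 \<ge> 2 \<Longrightarrow> sgD mu = sgD (shift (tl mu))"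
proof (induction "length mu + sum_list mu" arbitrary: mu rule: less_induct)
  case less
  obtain a c rest where mu: "mu = a # c # rest"
    using less.prems(2) by (cases mu; cases "tl mu") auto
  have ac: "c \<le> a" "2 \<le> c" using less.prems mu by auto
  have srt: "sorted_wrt (\<ge>) (c # rest)" "\<forall>z\<in>set rest. z \<le> c" using less.prems(1) mu by auto
  define nu where "nu = (c - 1) # shift rest"
  have Dmu: "shift (tl mu) = nu" using mu ac by (simp add: nu_def)
  have smu: "shift mu = (a - 1) # nu" using mu ac by (simp add: nu_def)
  have u_mu: "sgD mu = mex {sgD (c # rest), sgD (shift mu)}"
    by (subst sgD_unf) (use mu ac in \<open>auto simp: insert_commute\<close>)
  have u_nu: "sgD nu = mex ((if shift rest \<noteq> [] then {sgD (shift rest)} else {}) \<union>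
        (if c > 2 then {sgD (shift nu)} else {}))"
    by (subst sgD_unf) (auto simp: nu_def insert_commute)
  have o1: "sgD (c # rest) \<noteq> sgD nu" using sgD_ne_shift[of "c # rest"] ac by (simp add: nu_def)
  have o2: "sgD (shift mu) \<noteq> sgD nu" using sgD_ne_tl[of "shift mu"] smu by (simp add: nu_def)
  have IH1: "shift rest \<noteq> [] \<Longrightarrow> sgD (c # rest) = sgD (shift rest)"
  proof -
    assume "shift rest \<noteq> []"
    then have "rest \<noteq> []" "hd rest \<ge> 2" using shift_Nil_iff[of rest] srt by auto
    then show ?thesis
      using less.hyps[of "c # rest"] srt mu by (cases rest) auto
  qed
  have IH2: "c > 2 \<Longrightarrow> sgD (shift mu) = sgD (shift nu)"
  proof -
    assume "c > 2"
    moreover have "sorted_wrt (\<ge>) (shift mu)" using sorted_shift less.prems(1) by blast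
    moreover have "length (shift mu) + sum_list (shift mu) < length mu + sum_list mu"
      using length_shift_le[of mu] sum_list_shift_lt[of mu] mu ac by simp
    moreover have "1 < c - 1" using \<open>c > 2\<close> by simp
    ultimately show ?thesis
      using less.hyps[of "shift mu"] smu by (simp add: nu_def)
  qed
  have "sgD mu = sgD nu"
  proof (cases "shift rest \<noteq> []"; cases "c > 2")
    assume h: "shift rest \<noteq> []" "c > 2"
    show ?thesis using u_mu u_nu IH1[OF h(1)] IH2[OF h(2)] h by (simp add: insert_commute)
  next
    assume h: "\<not> shift rest \<noteq> []" "c > 2"
    then have "sgD nu = mex {sgD (shift mu)}" using u_nu IH2[OF h(2)] by simp
    then show ?thesis using u_mu o1 mex_two_eq by metis
  next
    assume h: "shift rest \<noteq> []" "\<not> c > 2"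
    then have "sgD nu = mex {sgD (c # rest)}" using u_nu IH1[OF h(1)] by simp
    then show ?thesis using u_mu o2 mex_two_eq by (metis insert_commute)
  next
    assume h: "\<not> shift rest \<noteq> []" "\<not> c > 2"
    then have "sgD nu = 0" using u_nu by simp
    then show ?thesis using u_mu o1 o2 mex_two_0 by metis
  qed
  then show ?case using Dmu by simp
qed


lemma shift_fm: "shift (filter (\<lambda>x. 0 < x) (map (\<lambda>x. x - m) xs)) = filter (\<lambda>x. 0 < x) (map (\<lambda>x. x - Suc m) xs)"
  by (induction xs) auto

definition Fm :: "nat list \<Rightarrow> nat \<Rightarrow> nat list" where
  "Fm mu m = filter (\<lambda>x. 0 < x) (map (\<lambda>x. x - m) (drop m mu))"

lemma sorted_nth_le: "sorted_wrt (\<ge>) (xs::nat list) \<Longrightarrow> i \<le> j \<Longrightarrow> j < length xs \<Longrightarrow> xs!j \<le> xs!i"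
  by (cases "i = j") (auto simp: sorted_wrt_iff_nth_less)

lemma iter: "is_partition mu \<Longrightarrow> m < length mu \<Longrightarrow> Suc m \<le> mu!m \<Longrightarrow> sgD mu = sgD (Fm mu m)"
proof (induction m)
  case 0
  have "Fm mu 0 = mu" using 0(1) by (auto simp: Fm_def is_partition_def intro: filter_True)
  then show ?case by simp
next
  case (Suc m)
  have s: "sorted_wrt (\<ge>) mu" using Suc.prems(1) is_partition_def by auto
  have le: "mu!(Suc m) \<le> mu!m" using sorted_nth_le[OF s, of m "Suc m"] Suc.prems(2) by simp
  have IH: "sgD mu = sgD (Fm mu m)" using Suc le by simp
  have dr: "drop m mu = mu!m # mu!(Suc m) # drop (Suc (Suc m)) mu" using Suc.prems(2)
    by (simp add: Cons_nth_drop_Suc)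
  have F: "Fm mu m = (mu!m - m) # (mu!(Suc m) - m) # filter (\<lambda>x. 0<x) (map (\<lambda>x. x - m) (drop (Suc (Suc m)) mu))"
    using dr Suc.prems le by (simp add: Fm_def)
  have sF: "sorted_wrt (\<ge>) (Fm mu m)" unfolding Fm_def using sorted_wrt_drop[OF s, of m]
    by (intro sorted_wrt_filter) (auto simp: sorted_wrt_map elim!: sorted_wrt_mono_rel[rotated])
  have "sgD (Fm mu m) = sgD (shift (tl (Fm mu m)))" by (rule diag[OF sF]) (use F Suc.prems in auto)
  moreover have "tl (Fm mu m) = filter (\<lambda>x. 0<x) (map (\<lambda>x. x - m) (drop (Suc m) mu))"
    using F Suc.prems Cons_nth_drop_Suc[of "Suc m" mu, symmetric] by simp
  ultimately show ?case using IH by (simp add: shift_fm Fm_def)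
qed

lemma filt_ones: "1 \<le> (k::nat) \<Longrightarrow> \<forall>x\<in>set xs. x \<le> k \<Longrightarrow>
   filter (\<lambda>x. 0<x) (map (\<lambda>x. x - (k-1)) xs) = replicate (length (filter (\<lambda>x. k \<le> x) xs)) 1"
proof (induction xs)
  case (Cons a xs)
  then have ak: "a \<le> k" "\<forall>x\<in>set xs. x \<le> k" by auto
  show ?case
  proof (cases "k \<le> a")
    case True
    then have "a = k" using ak by simp
    then have "a - (k - 1) = 1" using Cons.prems by simp
    then show ?thesis using Cons ak True by simp
  next
    case False
    then have "a - (k - 1) = 0" using ak Cons.prems by simp
    then show ?thesis using Cons ak False by simp
  qed
qed simp

lemma count_ge: "sorted_wrt (\<ge>) (mu::nat list) \<Longrightarrow> p \<le> j \<Longrightarrow> j \<le> length mu \<Longrightarrow> 0 < j \<Longrightarrow> k \<le> mu!(j-1)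
  \<Longrightarrow> (j < length mu \<longrightarrow> mu!j < k) \<Longrightarrow> length (filter (\<lambda>x. k \<le> x) (drop p mu)) = j - p"
proof -
  assume a: "sorted_wrt (\<ge>) mu" "p \<le> j" "j \<le> length mu" "0 < j" "k \<le> mu!(j-1)" "(j < length mu \<longrightarrow> mu!j < k)"
  have d: "drop p mu = take (j-p) (drop p mu) @ drop j mu" using a(2)
    by (metis append_take_drop_id drop_drop le_add_diff_inverse2)
  have t: "\<forall>x\<in>set (take (j-p) (drop p mu)). k \<le> x"
  proof
    fix x assume "x \<in> set (take (j-p) (drop p mu))"
    then obtain i where i: "i < length (take (j-p) (drop p mu))" "x = take (j-p) (drop p mu) ! i"
      by (auto simp: in_set_conv_nth)
    then have x: "x = mu!(p+i)" "p + i \<le> j - 1" using a by auto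
    have "mu!(j-1) \<le> mu!(p+i)" by (rule sorted_nth_le[OF a(1)]) (use x a in auto)
    then show "k \<le> x" using x a by linarith
  qed
  have u: "\<forall>x\<in>set (drop j mu). \<not> k \<le> x"
  proof
    fix x assume "x \<in> set (drop j mu)"
    then obtain i where i: "i < length (drop j mu)" "x = drop j mu ! i"
      by (auto simp: in_set_conv_nth)
    then have x: "x = mu!(j+i)" "j < length mu" "j + i < length mu" using a by auto
    have "mu!(j+i) \<le> mu!j" by (rule sorted_nth_le[OF a(1)]) (use x in auto)
    then show "\<not> k \<le> x" using x a by auto
  qed
  have "filter (\<lambda>x. k \<le> x) (drop p mu) = take (j-p) (drop p mu)"
    by (subst d) (simp add: t u)
  then show ?thesis using a by simp
qed

lemma sgD_ones: "sgD (replicate (Suc t) (Suc 0)) = t mod 2"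
proof (induction t)
  case 0
  show ?case by (subst sgD_unf) simp
next
  case (Suc t)
  have "sgD (replicate (Suc (Suc t)) (Suc 0)) = mex {sgD (replicate (Suc t) (Suc 0))}"
    by (subst sgD_unf) simp
  then show ?case using Suc by (simp add: mex_single) presburger
qed

lemma sgD_single: "sgD [Suc a] = a mod 2"
proof (induction a)
  case 0
  show ?case by (subst sgD_unf) simp
next
  case (Suc a)
  show ?case by (subst sgD_unf) (simp add: Suc mex_single mod_Suc)
qed

lemma shift_ones: "shift (replicate b 1) = []" "shift (replicate b (Suc 0)) = []" by (induction b) auto

lemma hook: "1 \<le> a \<Longrightarrow> sgD (a # replicate b 1) =
   mex ((if 0 < b then {(b - 1) mod 2} else {}) \<union> (if 1 < a then {(a - 2) mod 2} else {}))"
proof -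
  assume a: "1 \<le> a"
  have t: "0 < b \<Longrightarrow> sgD (replicate b 1) = (b - 1) mod 2" using sgD_ones[of "b-1"] by (simp add: One_nat_def)
  have s: "1 < a \<Longrightarrow> sgD [a - 1] = (a - 2) mod 2" using sgD_single[of "a-2"]
    by (simp add: Suc_diff_Suc numeral_2_eq_2)
  show ?thesis by (subst sgD_unf) (use a t s in \<open>auto simp: shift_ones\<close>)
qed

lemma math:
  assumes p: "is_partition mu" and k: "1 \<le> k" "k \<le> length mu" "k \<le> mu!(k-1)" "k < length mu \<longrightarrow> mu!k \<le> k"
    and j: "k \<le> j" "j \<le> length mu" "k \<le> mu!(j-1)" "j < length mu \<longrightarrow> mu!j < k"
  shows "sgD mu = mex ((if 0 < j-k then {(j-k-1) mod 2} else {}) \<union>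
     (if 1 < mu!(k-1) - (k-1) then {(mu!(k-1)-(k-1)-2) mod 2} else {}))"
proof -
  have s: "sorted_wrt (\<ge>) mu" using p is_partition_def by auto
  have "sgD mu = sgD (Fm mu (k-1))" using iter[OF p, of "k-1"] k by simp
  moreover have "drop (k-1) mu = mu!(k-1) # drop k mu" using k Cons_nth_drop_Suc[of "k-1" mu] by simp
  moreover have "\<forall>x\<in>set (drop k mu). x \<le> k"
  proof
    fix x assume "x \<in> set (drop k mu)"
    then obtain i where i: "i < length (drop k mu)" "x = drop k mu ! i"
      by (auto simp: in_set_conv_nth)
    then have x: "x = mu!(k+i)" "k < length mu" "k + i < length mu" using k by auto
    have "mu!(k+i) \<le> mu!k" by (rule sorted_nth_le[OF s]) (use x in auto)
    then show "x \<le> k" using x k by linarith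
  qed
  moreover have "length (filter (\<lambda>x. k \<le> x) (drop k mu)) = j - k"
    by (rule count_ge[OF s]) (use k j in auto)
  ultimately have "sgD mu = sgD ((mu!(k-1) - (k-1)) # replicate (j-k) 1)"
    using k filt_ones[of k "drop k mu"] by (simp add: Fm_def)
  also have "\<dots> = mex ((if 0 < j-k then {(j-k-1) mod 2} else {}) \<union>
     (if 1 < mu!(k-1) - (k-1) then {(mu!(k-1)-(k-1)-2) mod 2} else {}))"
    by (rule hook) (use k in auto)
  finally show ?thesis .
qed



lemma Pn1s[simp]: "Prog ! Suc 0 = Const 21 1" using Pn1 by simp

lemma Pn2s[simp]: "Prog ! Suc (Suc 0) = Add 22 0 25" using Pn2 by (simp add: numeral_2_eq_2)

lemma re: "1 \<le> i \<Longrightarrow> i \<le> length lam \<Longrightarrow> read_entry lam (int i) = int (lam!(i-1))"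
  unfolding read_entry_def by simp

lemma re0: "length lam < i \<Longrightarrow> read_entry lam (int i) = 0"
  unfolding read_entry_def by simp

lemma mex_int_opt: "mex_int (if P then int u else -1) (if Q then int v else -1)
   = int (mex ((if Q then {v} else {}) \<union> (if P then {u} else {})))"
proof -
  have "(\<lambda>k. int k \<noteq> (if P then int u else -1) \<and> int k \<noteq> (if Q then int v else -1))
     = (\<lambda>k. k \<notin> ((if Q then {v} else {}) \<union> (if P then {u} else {})))" by auto
  then show ?thesis unfolding mex_int_def mex_def by simp
qed

lemma Ae: "1 < (a::nat) \<Longrightarrow> int a mod 2 = int ((a-2) mod 2)"
proof -
  assume h: "1 < a"
  have e: "int a = int (a-2) + 2" using h by simp
  have "int ((a-2) mod 2) = int (a-2) mod 2" by (metis of_nat_mod of_nat_numeral)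
  moreover have "int a mod 2 = (int (a-2) + 2) mod 2" by (subst e) (rule refl)
  ultimately show ?thesis by simp
qed
lemma Be: "(k::nat) < j \<Longrightarrow> (int j - int k + 1) mod 2 = int ((j-k-1) mod 2)"
proof -
  assume h: "k < j"
  have e: "int j - int k + 1 = int (j-k-1) + 2" using h by simp
  have "int ((j-k-1) mod 2) = int (j-k-1) mod 2" by (metis of_nat_mod of_nat_numeral)
  moreover have "(int j - int k + 1) mod 2 = (int (j-k-1) + 2) mod 2" by (subst e) (rule refl)
  ultimately show ?thesis by simp
qed

theorem mainTheorem14:
  "\<exists>(P :: instr list) (C :: nat).
     \<forall>lam. is_partition lam \<longrightarrow>
       exec P lam (C * (floor_log (length lam) + 1)) (init_config lam) = Some (int (sgD lam))"
proof (intro exI allI impI)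
  fix lam :: "nat list"
  assume p: "is_partition lam"
  define r where "r = length lam"
  define t where "t = floor_log r + 1"
  have r1: "1 \<le> r" using p unfolding is_partition_def r_def by (cases lam) auto
  have pos: "\<forall>x\<in>set lam. 0 < x" using p unfolding is_partition_def by auto
  have rt0: "r \<le> 2^t" using floor_log_exp2_gt[of r] unfolding t_def by simp
  have rt: "int r \<le> 2^t" using rt0 by (metis of_nat_le_iff of_nat_numeral of_nat_power)
  define R0 :: "nat \<Rightarrow> int" where "R0 = (\<lambda>_. 0::int)(0 := int r)"
  have "\<exists>R1. reach Prog lam 3 (0,R0) (3,R1) \<and> R1 25 = 1 \<and> R1 21 = 1 \<and> R1 22 = int r + 1
      \<and> R1 33 = 0 \<and> R1 0 = int r"
    apply (intro exI conjI)
     apply (rule reach_mono[where N="Suc (Suc (Suc 0))"])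
      apply (rule reach_stepI, simp add: Pn len_Prog, simp add: Pn, simp add: Pn)+
      apply (simp only: numeral_3_eq_3, rule reach_refl)
    by (auto simp: R0_def)
  then obtain R1 where R1: "reach Prog lam 3 (0,R0) (3,R1)" "R1 25 = 1" "R1 21 = 1" "R1 22 = int r + 1"
      "R1 33 = 0" "R1 0 = int r" by blast
  have "lam!0 \<in> set lam" using r1 unfolding r_def by (cases lam) auto
  then have "0 < lam!0" using pos by blast
  then have l0: "1 \<le> read_entry lam 1" using r1 unfolding r_def read_entry_def by simp
  have lr: "read_entry lam (int r + 1) = 0" using re0[of lam "Suc r"] unfolding r_def by (simp add: add.commute)
  obtain Ra where Ra: "reach Prog lam (12*t+3) (3,R1) (15,Ra)" "\<forall>x. x\<notin>{21,22,23,24} \<longrightarrow> Ra x = R1 x"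
     "Ra 22 = Ra 21 + 1" "\<not> Ra 22 \<le> read_entry lam (Ra 22)" "Ra 21 \<le> read_entry lam (Ra 21)"
     "R1 21 \<le> Ra 21" "Ra 22 \<le> R1 22"
    using loop1[where R=R1 and lam=lam and t=t] R1 l0 lr rt r1 by auto
  have Ra0: "Ra 25 = 1" "Ra 33 = 0" "Ra 0 = int r" using Ra(2) R1 by auto
  have "\<exists>Rb. reach Prog lam 5 (15,Ra) (20,Rb) \<and> Rb 25 = 1 \<and> Rb 33 = 0 \<and> Rb 21 = Ra 21
      \<and> Rb 22 = int r + 1 \<and> Rb 27 = Ra 21 \<and> Rb 28 = read_entry lam (Ra 21) - Ra 21 + 1"
    apply (intro exI conjI)
     apply (rule reach_mono[where N="Suc (Suc (Suc (Suc (Suc 0))))"])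
      apply (rule reach_stepI, simp add: Pn len_Prog, simp add: Pn, simp add: Pn)+
      apply (rule reach_refl)
    by (auto simp: Ra0)
  then obtain Rb where Rb: "reach Prog lam 5 (15,Ra) (20,Rb)" "Rb 25 = 1" "Rb 33 = 0" "Rb 21 = Ra 21"
      "Rb 22 = int r + 1" "Rb 27 = Ra 21" "Rb 28 = read_entry lam (Ra 21) - Ra 21 + 1" by blast
  have k1: "1 \<le> Ra 21" "Ra 21 \<le> int r" using Ra R1 by auto
  obtain Rc where Rc: "reach Prog lam (12*t+3) (20,Rb) (32,Rc)" "\<forall>x. x\<notin>{21,22,23,24} \<longrightarrow> Rc x = Rb x"
     "Rc 22 = Rc 21 + 1" "\<not> Rb 27 \<le> read_entry lam (Rc 22)" "Rb 27 \<le> read_entry lam (Rc 21)"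
     "Rb 21 \<le> Rc 21" "Rc 22 \<le> Rb 22"
    using loop2[where R=Rb and lam=lam and t=t] Rb Ra(5) k1 lr rt r1 by auto
  have Rc0: "Rc 25 = 1" "Rc 33 = 0" "Rc 27 = Ra 21" "Rc 28 = read_entry lam (Ra 21) - Ra 21 + 1"
    using Rc(2) Rb by auto
  have "\<exists>Rd. reach Prog lam 11 (32,Rc) (43,Rd) \<and> Rd 32 = mex_int (if 1 < Rc 28 then Rc 28 mod 2 else -1)
      (if Rc 27 < Rc 21 then (Rc 21 - Rc 27 + 1) mod 2 else -1)"
  proof (cases "1 < Rc 28"; cases "Rc 27 < Rc 21")
    assume h: "1 < Rc 28" "Rc 27 < Rc 21"
    show ?thesis
    apply (intro exI conjI)
     apply (rule reach_mono[where N="Suc (Suc (Suc (Suc (Suc (Suc (Suc (Suc (Suc (Suc (Suc 0))))))))))"])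
      apply (rule reach_stepI, simp add: Pn len_Prog, simp add: Pn, simp add: Pn Rc0(1,2) h)+
      apply (rule reach_refl)
    using h by (auto simp: Rc0(1,2))
  next
    assume h: "1 < Rc 28" "\<not> Rc 27 < Rc 21"
    show ?thesis
    apply (intro exI conjI)
     apply (rule reach_mono[where N="Suc (Suc (Suc (Suc (Suc (Suc (Suc (Suc (Suc (Suc (Suc 0))))))))))"])
      apply (rule reach_stepI, simp add: Pn len_Prog, simp add: Pn, simp add: Pn Rc0(1,2) h)+
      apply (rule reach_refl)
    using h by (auto simp: Rc0(1,2))
  next
    assume h: "\<not> 1 < Rc 28" "Rc 27 < Rc 21"
    show ?thesis
    apply (intro exI conjI)
     apply (rule reach_mono[where N="Suc (Suc (Suc (Suc (Suc (Suc (Suc (Suc (Suc (Suc (Suc 0))))))))))"])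
      apply (rule reach_stepI, simp add: Pn len_Prog, simp add: Pn, simp add: Pn Rc0(1,2) h)+
      apply (rule reach_refl)
    using h by (auto simp: Rc0(1,2))
  next
    assume h: "\<not> 1 < Rc 28" "\<not> Rc 27 < Rc 21"
    show ?thesis
    apply (intro exI conjI)
     apply (rule reach_mono[where N="Suc (Suc (Suc (Suc (Suc (Suc (Suc (Suc (Suc (Suc (Suc 0))))))))))"])
      apply (rule reach_stepI, simp add: Pn len_Prog, simp add: Pn, simp add: Pn Rc0(1,2) h)+
      apply (rule reach_refl)
    using h by (auto simp: Rc0(1,2))
  qed
  then obtain Rd where Rd: "reach Prog lam 11 (32,Rc) (43,Rd)" "Rd 32 = mex_int (if 1 < Rc 28 then Rc 28 mod 2 else -1)
      (if Rc 27 < Rc 21 then (Rc 21 - Rc 27 + 1) mod 2 else -1)" by blast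
  have tot: "reach Prog lam (3 + (12*t+3) + 5 + (12*t+3) + 11) (0,R0) (43,Rd)"
    by (rule reach_trans[OF reach_trans[OF reach_trans[OF reach_trans[OF R1(1) Ra(1)] Rb(1)] Rc(1)] Rd(1)])
  have ex: "exec Prog lam (50 * t) (0,R0) = Some (Rd 32)"
    by (rule reach_halt[OF tot]) (auto simp: Pn len_Prog t_def)
  define k where "k = nat (Ra 21)"
  have kk: "Ra 21 = int k" using k1 by (simp add: k_def)
  have k1n: "1 \<le> k" "k \<le> r" using k1 kk by auto
  have kl: "k \<le> lam!(k-1)" using Ra(5) kk re[of k lam] k1n unfolding r_def by simp
  have kn: "k < r \<longrightarrow> lam!k \<le> k"
  proof
    assume "k < r"
    then have e: "read_entry lam (int k + 1) = int (lam!k)" using re[of "Suc k" lam] unfolding r_def by (simp add: add.commute)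
    then show "lam!k \<le> k" using Ra(3,4) kk using e by simp
  qed
  have Rc21: "Ra 21 \<le> Rc 21" "Rc 21 + 1 \<le> int r + 1" using Rc(3,6,7) Rb by auto
  define j where "j = nat (Rc 21)"
  have jj: "Rc 21 = int j" using Rc21 k1 by (simp add: j_def)
  have jk: "k \<le> j" "j \<le> r" using Rc21 jj kk by auto
  have jl: "k \<le> lam!(j-1)" using Rc(5) Rb(6) kk jj re[of j lam] jk k1n unfolding r_def by simp
  have jn: "j < r \<longrightarrow> lam!j < k"
  proof
    assume "j < r"
    then have e: "read_entry lam (int j + 1) = int (lam!j)" using re[of "Suc j" lam] unfolding r_def by (simp add: add.commute)
    then show "lam!j < k" using Rc(3,4) jj Rb(6) kk using e by simp
  qed
  have sg: "sgD lam = mex ((if 0 < j-k then {(j-k-1) mod 2} else {}) \<union>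
     (if 1 < lam!(k-1) - (k-1) then {(lam!(k-1)-(k-1)-2) mod 2} else {}))"
    by (rule math[OF p]) (use k1n kn jk jl jn kl in \<open>auto simp: r_def\<close>)
  define a where "a = lam!(k-1) - (k-1)"
  have a28: "Rc 28 = int a" using Rc0(4) kk re[of k lam] k1n kl unfolding r_def a_def by simp
  have A: "(if 1 < Rc 28 then Rc 28 mod 2 else -1) = (if 1 < a then int ((a-2) mod 2) else -1)"
    using a28 Ae[of a] by auto
  have B: "(if Rc 27 < Rc 21 then (Rc 21 - Rc 27 + 1) mod 2 else -1) = (if 0 < j-k then int ((j-k-1) mod 2) else -1)"
    using jj Rc0(3) kk Be[of k j] by auto
  have "Rd 32 = int (sgD lam)"
    unfolding Rd(2) A B sg mex_int_opt a_def ..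
  then show "exec Prog lam (50 * (floor_log (length lam) + 1)) (init_config lam) = Some (int (sgD lam))"
    using ex unfolding init_config_def R0_def t_def r_def by simp
qed
end
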